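(* Let $q$ be an odd prime and let $$\Sigma_2:=\sum_{\chi\ne\chi_0}\sum_{p}\sum_{m\ge2}\frac{\chi(p^m)}{m p^m},$$ where $\chi$ runs over the non-principal Dirichlet characters modulo $q$ and $p$ over all primes. Then $$|\Sigma_2|<\mathcal{A}+\frac{\pi^2/6-\mathcal{A}}{q}.$$
   Context: $\chi_0$ is the principal character modulo $q$. $\mathcal{A}:=\sum_{m\ge2}\frac1m\sum_{k=\alpha(m)}^{\beta(m)}\frac1k$ with $\alpha(m)=\frac12(m^2-m)$, $\beta(m)=\frac12(m^2+m)-1$ ($\mathcal{A}\approx1.60009$). *)

theory Defs
  imports "HOL-Analysis.Analysis" "HOL-Computational_Algebra.Primes"
begin

definition dirichlet_character :: "nat \<Rightarrow> (nat \<Rightarrow> complex) \<Rightarrow> bool" where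
  "dirichlet_character q chi \<longleftrightarrow>
     (\<forall>m n. chi (m * n) = chi m * chi n) \<and>
     (\<forall>n. chi (n + q) = chi n) \<and>
     (\<forall>n. chi n = 0 \<longleftrightarrow> \<not> coprime n q)"

definition principal_character :: "nat \<Rightarrow> nat \<Rightarrow> complex" where
  "principal_character q = (\<lambda>n. if coprime n q then 1 else 0)"

definition alpha_idx :: "nat \<Rightarrow> nat" where
  "alpha_idx m = (m^2 - m) div 2"

definition beta_idx :: "nat \<Rightarrow> nat" where
  "beta_idx m = (m^2 + m) div 2 - 1"

definition const_A :: real where
  "const_A = (\<Sum>\<^sub>\<infinity> m\<in>{2::nat..}. (1 / real m) * (\<Sum>k = alpha_idx m..beta_idx m. 1 / real k))"

definition Sigma2 :: "nat \<Rightarrow> complex" where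
  "Sigma2 q = (\<Sum>chi \<in> {chi. dirichlet_character q chi \<and> chi \<noteq> principal_character q}.
      \<Sum>\<^sub>\<infinity> p\<in>{p::nat. prime p}. \<Sum>\<^sub>\<infinity> m\<in>{2::nat..}.
         chi (p ^ m) / (of_nat m * of_nat (p ^ m)))"

end

theory Submission
  imports Defs "HOL-Number_Theory.Number_Theory"
begin


lemma dc_mult: "dirichlet_character q chi \<Longrightarrow> chi (m*n) = chi m * chi n"
  by (simp add: dirichlet_character_def)
lemma dc_period: "dirichlet_character q chi \<Longrightarrow> chi (n + q) = chi n"
  by (simp add: dirichlet_character_def)
lemma dc_zero: "dirichlet_character q chi \<Longrightarrow> chi n = 0 \<longleftrightarrow> \<not> coprime n q"
  by (simp add: dirichlet_character_def)

lemma dc_period_k: "dirichlet_character q chi \<Longrightarrow> chi (n + k*q) = chi n"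
proof (induction k)
  case (Suc k)
  have "chi (n + Suc k * q) = chi ((n + k*q) + q)" by (simp add: algebra_simps)
  also have "\<dots> = chi (n + k*q)" using dc_period[OF Suc.prems] by blast
  finally show ?case using Suc by simp
qed simp

lemma dc_mod: "dirichlet_character q chi \<Longrightarrow> chi n = chi (n mod q)"
  using dc_period_k[of q chi "n mod q" "n div q"] by (simp add: mod_div_mult_eq)

lemma dc_cong: "dirichlet_character q chi \<Longrightarrow> [m = n] (mod q) \<Longrightarrow> chi m = chi n"
  by (metis cong_def dc_mod)

lemma dc_one: "dirichlet_character q chi \<Longrightarrow> chi 1 = 1"
proof -
  assume d: "dirichlet_character q chi"
  have "chi 1 = chi 1 * chi 1" using dc_mult[OF d, of 1 1] by simp
  moreover have "chi 1 \<noteq> 0" using dc_zero[OF d, of 1] by simp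
  ultimately show ?thesis by (metis mult_cancel_left1)
qed

lemma dc_pow: "dirichlet_character q chi \<Longrightarrow> chi (n^k) = chi n ^ k"
proof (induction k)
  case 0
  then show ?case using dc_one[of q chi] by (simp only: power_0)
next
  case (Suc k)
  then show ?case using dc_mult[of q chi n "n^k"] by simp
qed

lemma dc_root: assumes "prime q" "dirichlet_character q chi" "coprime n q"
  shows "chi n ^ (q - 1) = 1"
proof -
  have "\<not> q dvd n" using assms
    by (metis coprime_absorb_left coprime_commute not_prime_unit)
  then have "[n ^ (q - 1) = 1] (mod q)" using fermat_theorem assms(1) by blast
  then have "chi (n^(q-1)) = chi 1" using dc_cong[OF assms(2)] by blast
  then show ?thesis using dc_pow[OF assms(2)] dc_one[OF assms(2)] by simp
qed

lemma dc_norm: assumes "prime q" "dirichlet_character q chi"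
  shows "norm (chi n) \<le> 1"
proof (cases "coprime n q")
  case True
  have "chi n ^ (q-1) = 1" using dc_root assms True by blast
  then have "norm (chi n) ^ (q-1) = 1" by (metis norm_one norm_power)
  moreover have "q - 1 > 0" using assms prime_gt_1_nat by auto
  ultimately have "norm (chi n) = 1"
    using power_eq_iff_eq_base[of "q-1" "norm (chi n)" 1] by simp
  then show ?thesis by simp
next
  case False
  then have "chi n = 0" using dc_zero[OF assms(2), of n] by blast
  then show ?thesis by simp
qed

lemma principal_dc: "dirichlet_character q (principal_character q)"
  unfolding dirichlet_character_def principal_character_def
proof (intro conjI allI)
  fix m n :: nat
  show "(if coprime (m * n) q then 1 else 0) = (if coprime m q then 1 else (0::complex)) * (if coprime n q then 1 else 0)"
    by simp
next
  fix n :: nat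
  have "coprime (n+q) q = coprime n q" by (simp only: coprime_iff_gcd_eq_1 gcd_add1)
  then show "(if coprime (n + q) q then 1 else 0) = (if coprime n q then 1 else (0::complex))"
    by simp
next
  fix n :: nat
  show "((if coprime n q then 1 else (0::complex)) = 0) = (\<not> coprime n q)" by simp
qed

lemma primroot_exists: assumes "prime q" "odd q" shows "\<exists>g. residue_primroot q g"
proof -
  have "q \<in> {p ^ k |p k. prime p \<and> odd p \<and> k > 0}"
  proof -
    have "q = q^1 \<and> prime q \<and> odd q \<and> (1::nat) > 0" using assms by simp
    then show ?thesis by blast
  qed
  then have "q \<in> cyclic_moduli" unfolding cyclic_moduli_def by blast
  then show ?thesis using residue_primroot_iff_in_cyclic_moduli by blast
qed

lemma primroot_gen: assumes "prime q" "residue_primroot q g" "coprime n q"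
  shows "\<exists>i<q-1. g ^ i mod q = n mod q"
proof -
  have q1: "q > 1" using assms prime_gt_1_nat by blast
  have "\<not> q dvd n" using assms
    by (metis coprime_absorb_left coprime_commute not_prime_unit)
  then have "n mod q > 0" by (simp add: dvd_eq_mod_eq_0)
  moreover have "n mod q \<le> q" using q1 by (simp add: less_imp_le)
  moreover have "coprime (n mod q) q" using assms(3)
    using q1 by simp
  ultimately have "n mod q \<in> totatives q"
    by (simp add: in_totatives_iff)
  moreover have "(\<lambda>i. g^i mod q) ` {..<q-1} = totatives q"
    using residue_primroot_is_generator[OF q1 assms(2)] totient_prime[OF assms(1)]
    unfolding bij_betw_def by simp
  ultimately have "n mod q \<in> (\<lambda>i. g^i mod q) ` {..<q-1}" by simp
  then obtain i where "i \<in> {..<q-1}" "n mod q = g^i mod q" by (rule imageE)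
  then show ?thesis by (intro exI[of _ i]) simp
qed


locale prq =
  fixes q g :: nat
  assumes q_prime: "prime q" and g_root: "residue_primroot q g"
begin

lemma q_gt1: "q > 1" using q_prime prime_gt_1_nat by blast

lemma g_coprime: "coprime g q"
  using g_root by (simp add: residue_primroot_def coprime_commute)

lemma ord_g: "ord q g = q - 1"
  using g_root totient_prime[OF q_prime] by (simp add: residue_primroot_def)

definition ind :: "nat \<Rightarrow> nat" where
  "ind n = inv_into {..<q-1} (\<lambda>i. g^i mod q) (n mod q)"

lemma ind: assumes "coprime n q" shows "ind n < q - 1" "g ^ ind n mod q = n mod q"
proof -
  obtain i where "i < q - 1" "g ^ i mod q = n mod q"
    using primroot_gen[OF q_prime g_root assms] by blast
  then have mem: "n mod q \<in> (\<lambda>i. g^i mod q) ` {..<q-1}" by force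
  show "ind n < q - 1" unfolding ind_def using inv_into_into[OF mem] by simp
  show "g ^ ind n mod q = n mod q" unfolding ind_def using f_inv_into_f[OF mem] by simp
qed

definition zeta :: complex where "zeta = cis (2 * pi / real (q - 1))"

lemma zeta_pow: "zeta ^ k = cis (2 * pi * real k / real (q - 1))"
proof -
  have "zeta ^ k = cis (real k * (2*pi/real(q-1)))" unfolding zeta_def by (rule Complex.DeMoivre)
  also have "real k * (2*pi/real(q-1)) = 2*pi*real k/real(q-1)" by simp
  finally show ?thesis .
qed

lemma zeta_qm1: "zeta ^ (q - 1) = 1"
proof -
  have "q - 1 > 0" using q_gt1 by simp
  then have "2 * pi * real (q - 1) / real (q - 1) = 2 * pi" by simp
  then show ?thesis unfolding zeta_pow by (simp add: complex_eq_iff)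
qed

lemma zeta_mod: "zeta ^ a = zeta ^ (a mod (q - 1))"
proof -
  have "a = (q-1)*(a div (q-1)) + a mod (q-1)" by simp
  then have "zeta^a = zeta^((q-1)*(a div (q-1))) * zeta^(a mod (q-1))" by (metis power_add)
  also have "zeta^((q-1)*(a div (q-1))) = 1" by (simp only: power_mult zeta_qm1 power_one)
  finally show ?thesis by simp
qed

lemma zeta_inj: assumes "a < q - 1" "b < q - 1" "zeta ^ a = zeta ^ b" shows "a = b"
proof -
  have "q - 1 > 0" using q_gt1 by simp
  from Complex.bij_betw_roots_unity[OF this] have "inj_on (\<lambda>k. cis (2 * pi * real k / real (q-1))) {..<q-1}"
    by (simp add: bij_betw_def)
  then show ?thesis using assms unfolding zeta_pow inj_on_def by blast
qed

lemma zeta_nz: "zeta ^ k \<noteq> 0" unfolding zeta_pow by simp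

definition chi1 :: "nat \<Rightarrow> complex" where
  "chi1 n = (if coprime n q then zeta ^ ind n else 0)"

lemma ind_mult: assumes "coprime m q" "coprime n q"
  shows "zeta ^ ind (m * n) = zeta ^ ind m * zeta ^ ind n"
proof -
  have mn: "coprime (m * n) q" using assms by simp
  have "g ^ (ind m + ind n) mod q = ((g ^ ind m mod q) * (g ^ ind n mod q)) mod q"
    by (simp add: power_add mod_mult_eq)
  also have "\<dots> = (m mod q * (n mod q)) mod q" using ind(2)[OF assms(1)] ind(2)[OF assms(2)] by simp
  also have "\<dots> = (m * n) mod q" by (simp add: mod_mult_eq)
  also have "\<dots> = g ^ ind (m*n) mod q" using ind(2)[OF mn] by simp
  finally have "[g ^ (ind m + ind n) = g ^ ind (m*n)] (mod q)" by (simp add: cong_def)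
  then have "[ind m + ind n = ind (m*n)] (mod (q - 1))"
    using order_divides_expdiff[of q g] g_coprime ord_g by (simp add: coprime_commute)
  then have "(ind m + ind n) mod (q-1) = ind (m*n) mod (q-1)" by (simp add: cong_def)
  then have "zeta ^ (ind m + ind n) = zeta ^ ind (m*n)" using zeta_mod by metis
  then show ?thesis by (simp add: power_add)
qed

lemma chi1_dc: "dirichlet_character q chi1"
  unfolding dirichlet_character_def
proof (intro conjI allI)
  fix m n :: nat
  show "chi1 (m * n) = chi1 m * chi1 n"
  proof (cases "coprime m q \<and> coprime n q")
    case True
    then show ?thesis unfolding chi1_def using ind_mult[of m n] by simp
  next
    case False
    then show ?thesis unfolding chi1_def by auto
  qed
next
  fix n :: nat
  have "coprime (n+q) q = coprime n q" by (simp only: coprime_iff_gcd_eq_1 gcd_add1)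
  moreover have "ind (n + q) = ind n" unfolding ind_def by simp
  ultimately show "chi1 (n + q) = chi1 n" unfolding chi1_def by simp
next
  fix n :: nat
  show "(chi1 n = 0) = (\<not> coprime n q)" unfolding chi1_def using zeta_nz by simp
qed

lemma coprime_small: assumes "0 < n" "n < q" shows "coprime n q"
proof -
  have "\<not> q dvd n" using assms by (auto dest: dvd_imp_le)
  then show ?thesis using prime_imp_coprime[OF q_prime] by (simp add: coprime_commute)
qed

lemma chi1_inj: "inj_on chi1 {1..<q}"
proof (rule inj_onI)
  fix m n assume m: "m \<in> {1..<q}" and n: "n \<in> {1..<q}" and e: "chi1 m = chi1 n"
  have cm: "coprime m q" and cn: "coprime n q" using m n coprime_small by auto
  have "zeta ^ ind m = zeta ^ ind n" using e cm cn unfolding chi1_def by simp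
  then have "ind m = ind n" using zeta_inj ind(1)[OF cm] ind(1)[OF cn] by blast
  then have "m mod q = n mod q" using ind(2)[OF cm] ind(2)[OF cn] by simp
  then show "m = n" using m n by simp
qed

lemma chi1_ne1: assumes "coprime n q" "\<not> [n = 1] (mod q)" shows "chi1 n \<noteq> 1"
proof
  assume h: "chi1 n = 1"
  have "chi1 (n mod q) = 1" using h dc_mod[OF chi1_dc, of n] by simp
  moreover have "chi1 1 = 1" using dc_one[OF chi1_dc] .
  moreover have "n mod q \<in> {1..<q}"
  proof -
    have "\<not> q dvd n" using assms(1) q_prime
      by (metis coprime_absorb_left coprime_commute not_prime_unit)
    then show ?thesis using q_gt1 by (simp add: dvd_eq_mod_eq_0 Suc_le_eq)
  qed
  moreover have "(1::nat) \<in> {1..<q}" using q_gt1 by simp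
  ultimately have "n mod q = 1" using chi1_inj unfolding inj_on_def by metis
  then show False using assms(2) q_gt1 by (simp add: cong_def)
qed

abbreviation "DD \<equiv> {chi. dirichlet_character q chi}"

lemma D_det: assumes "dirichlet_character q chi" "dirichlet_character q psi" "chi g = psi g"
  shows "chi = psi"
proof
  fix n
  show "chi n = psi n"
  proof (cases "coprime n q")
    case True
    obtain i where i: "g ^ i mod q = n mod q" using primroot_gen[OF q_prime g_root True] by blast
    have "chi n = chi (g ^ i)" using dc_mod[OF assms(1), of n] dc_mod[OF assms(1), of "g^i"] i by simp
    moreover have "psi n = psi (g ^ i)" using dc_mod[OF assms(2), of n] dc_mod[OF assms(2), of "g^i"] i by simp
    ultimately show ?thesis using assms(3) dc_pow[OF assms(1)] dc_pow[OF assms(2)] by simp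
  next
    case False
    then show ?thesis using dc_zero[OF assms(1), of n] dc_zero[OF assms(2), of n] by simp
  qed
qed

lemma D_finite_card: "finite DD" "card DD \<le> q - 1"
proof -
  have inj: "inj_on (\<lambda>chi. chi g) DD" using D_det by (auto simp: inj_on_def)
  have sub: "(\<lambda>chi. chi g) ` DD \<subseteq> {z. z ^ (q-1) = 1}"
    using dc_root[OF q_prime _ g_coprime] by auto
  have fin: "finite {z::complex. z ^ (q-1) = 1}" using q_gt1 by (intro finite_roots_unity) simp
  show "finite DD" using inj_on_finite[OF inj sub fin] .
  have "card DD \<le> card {z::complex. z ^ (q-1) = 1}" using card_inj_on_le[OF inj sub fin] .
  also have "\<dots> = q - 1" using q_gt1 by (intro card_roots_unity_eq) simp
  finally show "card DD \<le> q - 1" .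
qed

lemma prod_dc: assumes "dirichlet_character q chi" "dirichlet_character q psi"
  shows "dirichlet_character q (\<lambda>n. chi n * psi n)"
  using assms unfolding dirichlet_character_def by (auto simp: mult_ac)

lemma orth: assumes "coprime n q" "\<not> [n = 1] (mod q)"
  shows "(\<Sum>chi\<in>DD. chi n) = 0"
proof -
  let ?h = "\<lambda>chi. (\<lambda>k. chi1 k * chi k)"
  have sub: "?h ` DD \<subseteq> DD" using prod_dc[OF chi1_dc] by auto
  have inj: "inj_on ?h DD"
  proof (rule inj_onI)
    fix chi psi assume c: "chi \<in> DD" and p: "psi \<in> DD" and e: "?h chi = ?h psi"
    show "chi = psi"
    proof
      fix k
      show "chi k = psi k"
      proof (cases "coprime k q")
        case True
        then have "chi1 k \<noteq> 0" using dc_zero[OF chi1_dc] by blast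
        moreover have "chi1 k * chi k = chi1 k * psi k" using e by metis
        ultimately show ?thesis by simp
      next
        case False
        then show ?thesis using c p dc_zero[of q chi k] dc_zero[of q psi k] by simp
      qed
    qed
  qed
  have im: "?h ` DD = DD" using endo_inj_surj[OF D_finite_card(1) sub inj] .
  have "(\<Sum>chi\<in>DD. chi n) = (\<Sum>chi\<in>?h ` DD. chi n)" using im by simp
  also have "\<dots> = (\<Sum>chi\<in>DD. chi1 n * chi n)" using sum.reindex[OF inj] by simp
  also have "\<dots> = chi1 n * (\<Sum>chi\<in>DD. chi n)" by (simp add: sum_distrib_left)
  finally have "(1 - chi1 n) * (\<Sum>chi\<in>DD. chi n) = 0" by (simp add: algebra_simps)
  then show ?thesis using chi1_ne1[OF assms] by simp
qed

lemma sumX_1: assumes "[n = 1] (mod q)"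
  shows "(\<Sum>chi\<in>DD - {principal_character q}. chi n) = of_nat (card DD) - 1"
proof -
  have cop: "coprime n q"
    using assms q_gt1 by (metis cong_def coprime_mod_left_iff coprime_1_left mod_less not_one_less_zero less_imp_neq)
  have "(\<Sum>chi\<in>DD - {principal_character q}. chi n) = (\<Sum>chi\<in>DD. chi n) - principal_character q n"
    using D_finite_card(1) principal_dc by (subst sum_diff1) auto
  also have "(\<Sum>chi\<in>DD. chi n) = (\<Sum>chi\<in>DD. 1)"
  proof (rule sum.cong[OF refl])
    fix chi assume "chi \<in> DD"
    then have d: "dirichlet_character q chi" by simp
    show "chi n = 1" using dc_cong[OF d assms] dc_one[OF d] by simp
  qed
  also have "principal_character q n = 1" using cop by (simp add: principal_character_def)
  finally show ?thesis by simp
qed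

lemma sumX_2: assumes "coprime n q" "\<not> [n = 1] (mod q)"
  shows "(\<Sum>chi\<in>DD - {principal_character q}. chi n) = - 1"
proof -
  have "(\<Sum>chi\<in>DD - {principal_character q}. chi n) = (\<Sum>chi\<in>DD. chi n) - principal_character q n"
    using D_finite_card(1) principal_dc by (subst sum_diff1) auto
  then show ?thesis using orth[OF assms] assms(1) by (simp add: principal_character_def)
qed

lemma sumX_3: assumes "\<not> coprime n q"
  shows "(\<Sum>chi\<in>DD - {principal_character q}. chi n) = 0"
  using assms dc_zero by (intro sum.neutral) auto

end



lemma geo_bound: fixes x :: real assumes "0 \<le> x" "x < 1"
  shows "(\<Sum>m=b..M. x^m) \<le> x^b / (1 - x)"
proof (cases "M < b")
  case True
  then show ?thesis using assms by simp
next
  case False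
  then have "(\<Sum>m=b..M. x^m) = (x^b - x^Suc M)/(1-x)" using assms by (simp add: sum_gp)
  also have "\<dots> \<le> x^b/(1-x)" using assms by (intro divide_right_mono) auto
  finally show ?thesis .
qed

lemma tele_eq: assumes "a \<ge> 2"
  shows "(\<Sum>p=a..a+N. 1/(real p * (real p - 1))) = 1/(real a - 1) - 1/real (a+N)"
proof (induction N)
  case 0
  have "real a > 1" using assms by simp
  then show ?case by (simp add: field_simps)
next
  case (Suc N)
  have pos: "real (a + N) > 1" using assms by simp
  have "(\<Sum>p=a..a+Suc N. 1/(real p * (real p - 1)))
      = (\<Sum>p=a..a+N. 1/(real p * (real p - 1))) + 1/(real (a+N+1) * (real (a+N+1) - 1))"
    by simp
  also have "\<dots> = 1/(real a - 1) - 1/real (a+N) + 1/(real (a+N+1) * real (a+N))"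
    using Suc by simp
  also have "\<dots> = 1/(real a - 1) - 1/real (a + Suc N)"
  proof -
    define x where "x = real (a+N)"
    have x1: "x > 1" using pos x_def by auto
    have x0: "x \<noteq> 0" "x + 1 \<noteq> 0" using x1 by linarith+
    have "1/x - 1/(x+1) = (1*(x+1) - x*1)/(x*(x+1))" using diff_frac_eq[OF x0(1) x0(2)] by simp
    also have "\<dots> = 1/((x+1)*x)" by (simp add: mult.commute)
    finally have e: "1/x - 1/(x+1) = 1/((x+1)*x)" .
    have r: "real (a+N+1) = x+1" "real (a + Suc N) = x+1" "real (a+N) = x"
      using x_def by auto
    show ?thesis unfolding r using e by linarith
  qed
  finally show ?case .
qed

lemma tele: assumes "a \<ge> 2"
  shows "(\<Sum>p=a..P. 1/(real p * (real p - 1))) \<le> 1/(real a - 1)"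
proof (cases "P < a")
  case True
  then show ?thesis using assms by simp
next
  case False
  then have "P = a + (P - a)" by simp
  then have "(\<Sum>p=a..P. 1/(real p * (real p - 1))) = 1/(real a - 1) - 1/real (a+(P-a))"
    using tele_eq[OF assms, of "P-a"] by metis
  also have "\<dots> \<le> 1/(real a - 1)" by simp
  finally show ?thesis .
qed

definition wt :: "nat \<times> nat \<Rightarrow> real" where
  "wt x = 1 / (real (snd x) * real (fst x) ^ snd x)"

lemma wt_nonneg: "wt x \<ge> 0" unfolding wt_def by simp

lemma inner_bound: assumes "a \<ge> 2" "b \<ge> 2" "p \<ge> a"
  shows "(\<Sum>m=b..M. wt (p,m)) \<le> (1/real b) * (1/real a)^(b-2) * (1/(real p * (real p - 1)))"
proof -
  have p2: "real p \<ge> 2" using assms by simp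
  have "(\<Sum>m=b..M. wt (p,m)) \<le> (\<Sum>m=b..M. (1/real b) * (1/real p)^m)"
  proof (rule sum_mono)
    fix m assume "m \<in> {b..M}"
    then have "real m \<ge> real b" "real b > 0" using assms by auto
    moreover have "real p ^ m > 0" using p2 by simp
    ultimately have "real b * real p ^ m \<le> real m * real p ^ m" by (intro mult_right_mono) auto
    then have "1/(real m * real p ^ m) \<le> 1/(real b * real p ^ m)"
      using \<open>real b > 0\<close> \<open>real p ^ m > 0\<close> by (intro divide_left_mono) auto
    then show "wt (p,m) \<le> (1/real b) * (1/real p)^m" unfolding wt_def by (simp add: power_one_over)
  qed
  also have "\<dots> = (1/real b) * (\<Sum>m=b..M. (1/real p)^m)" by (simp add: sum_distrib_left)
  also have "\<dots> \<le> (1/real b) * ((1/real p)^b / (1 - 1/real p))"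
    using p2 by (intro mult_left_mono geo_bound) auto
  also have "(1/real p)^b / (1 - 1/real p) = (1/real p)^(b-2) * (1/(real p * (real p - 1)))"
  proof -
    have "b = (b-2) + 2" using assms by simp
    then have "(1/real p)^b = (1/real p)^(b-2) * (1/real p)^2" by (metis power_add)
    moreover have "(1/real p)^2 / (1 - 1/real p) = 1/(real p * (real p - 1))"
      using p2 by (simp add: field_simps power2_eq_square)
    ultimately show ?thesis by (metis times_divide_eq_right)
  qed
  also have "(1/real b) * ((1/real p)^(b-2) * (1/(real p * (real p - 1))))
      \<le> (1/real b) * ((1/real a)^(b-2) * (1/(real p * (real p - 1))))"
    using assms p2 by (intro mult_left_mono mult_right_mono power_mono) (auto simp: field_simps)
  finally show ?thesis by (simp add: mult.assoc)
qed

lemma box_bound: assumes "a \<ge> 2" "b \<ge> 2" "finite F" "\<forall>x\<in>F. fst x \<ge> a \<and> snd x \<ge> b"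
  shows "(\<Sum>x\<in>F. wt x) \<le> (1/real b) * (1/real a)^(b-2) * (1/(real a - 1))"
proof (cases "F = {}")
  case True
  then show ?thesis using assms by simp
next
  case False
  define P where "P = Max (fst ` F)"
  define M where "M = Max (snd ` F)"
  have sub: "F \<subseteq> {a..P} \<times> {b..M}"
  proof
    fix x assume "x \<in> F"
    then have "fst x \<le> P" "snd x \<le> M" using assms(3) unfolding P_def M_def by auto
    then show "x \<in> {a..P} \<times> {b..M}" using assms(4) \<open>x \<in> F\<close> by (cases x) auto
  qed
  let ?c = "(1/real b) * (1/real a)^(b-2)"
  have "(\<Sum>x\<in>F. wt x) \<le> (\<Sum>x\<in>{a..P} \<times> {b..M}. wt x)"
    using sub wt_nonneg by (intro sum_mono2) auto
  also have "\<dots> = (\<Sum>p=a..P. \<Sum>m=b..M. wt (p,m))" by (simp add: sum.cartesian_product)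
  also have "\<dots> \<le> (\<Sum>p=a..P. ?c * (1/(real p * (real p - 1))))"
    using inner_bound assms by (intro sum_mono) auto
  also have "\<dots> = ?c * (\<Sum>p=a..P. 1/(real p * (real p - 1)))" by (simp add: sum_distrib_left)
  also have "\<dots> \<le> ?c * (1/(real a - 1))" using tele[OF assms(1)] by (intro mult_left_mono) auto
  finally show ?thesis .
qed

definition HH :: "nat \<Rightarrow> real" where "HH n = (\<Sum>k=1..n. 1/real k)"

lemma HH_Suc: "HH (Suc n) = HH n + 1/real (Suc n)" unfolding HH_def by simp

lemma HH_mono: "m \<le> n \<Longrightarrow> HH m \<le> HH n"
  unfolding HH_def by (intro sum_mono2) auto

lemma harm: "finite S \<Longrightarrow> 0 \<notin> S \<Longrightarrow> (\<Sum>j\<in>S. 1/real j) \<le> HH (card S)"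
proof (induction "card S" arbitrary: S)
  case 0
  then show ?case by (simp add: HH_def)
next
  case (Suc n)
  then have ne: "S \<noteq> {}" by auto
  define m where "m = Max S"
  have mS: "m \<in> S" using Suc ne m_def by simp
  have "S \<subseteq> {1..m}"
  proof
    fix x assume "x \<in> S"
    have "0 \<notin> S" "finite S" using Suc.prems by auto
    have "x \<noteq> 0" using \<open>x \<in> S\<close> \<open>0 \<notin> S\<close> by metis
    moreover have "x \<le> m" using Max_ge[OF \<open>finite S\<close> \<open>x \<in> S\<close>] m_def by simp
    ultimately show "x \<in> {1..m}" by simp
  qed
  then have "card S \<le> m" using card_mono[of "{1..m}" S] by simp
  have c: "card (S - {m}) = n" using Suc mS by simp
  have s1: "(\<Sum>j\<in>S. 1/real j) = 1/real m + (\<Sum>j\<in>S - {m}. 1/real j)"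
    using Suc mS by (simp add: sum.remove)
  have s2: "(\<Sum>j\<in>S - {m}. 1/real j) \<le> HH n" using Suc.hyps(1)[of "S - {m}"] Suc c by simp
  have s3: "1/real m \<le> 1/real (Suc n)" using \<open>card S \<le> m\<close> Suc by (simp add: frac_le)
  have s4: "HH (card S) = HH n + 1/real (Suc n)" using HH_Suc[of n] Suc.hyps(2) by simp
  show ?case using s1 s2 s3 s4 by linarith
qed


lemma ab_facts: assumes "t \<ge> 2"
  shows "alpha_idx t \<ge> 1" "beta_idx t = alpha_idx t + t - 1" "beta_idx (t-1) + 1 = alpha_idx t"
        "2 * alpha_idx t = t * (t - 1)"
proof -
  obtain s where ts: "t = Suc s" and s1: "s \<ge> 1" using assms by (cases t) auto
  have "even (s * (s + 1))" by simp
  then obtain e where e: "s * (s + 1) = 2 * e" by (metis dvdE)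
  have e1: "e \<ge> 1" using e s1
    by (metis One_nat_def add_is_0 le_add2 less_one mult_is_0 nat_0_less_mult_iff not_le one_le_mult_iff)
  have t1: "t^2 - t = 2 * e" using e ts by (simp add: power2_eq_square algebra_simps)
  have t2: "t^2 + t = 2 * e + 2 * s + 2" using e ts by (simp add: power2_eq_square algebra_simps)
  have t3: "(t-1)^2 + (t-1) = 2 * e" using e ts by (simp add: power2_eq_square algebra_simps)
  have a: "alpha_idx t = e" unfolding alpha_idx_def t1 by simp
  have b: "beta_idx t = e + s" unfolding beta_idx_def t2 by simp
  have b1: "beta_idx (t-1) = e - 1" unfolding beta_idx_def t3 by simp
  show "alpha_idx t \<ge> 1" using a e1 by simp
  show "beta_idx t = alpha_idx t + t - 1" using a b ts by simp
  show "beta_idx (t-1) + 1 = alpha_idx t" using a b1 e1 by simp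
  show "2 * alpha_idx t = t * (t - 1)" using a e ts by (simp add: algebra_simps)
qed

lemma abel_aux:
  fixes a B c :: "nat \<Rightarrow> real"
  assumes cm: "\<forall>t. 1 \<le> t \<longrightarrow> c (Suc t) \<le> c t" and B1: "B 1 = 0"
    and hyp: "\<forall>t. 1 \<le> t \<longrightarrow> t \<le> T \<longrightarrow> (\<Sum>s=2..t. a s) \<le> B t"
  shows "Suc N \<le> T \<Longrightarrow> (\<Sum>t=2..Suc N. a t * c t) + (B (Suc N) - (\<Sum>s=2..Suc N. a s)) * c (Suc N)
           \<le> (\<Sum>t=2..Suc N. (B t - B (t-1)) * c t)"
proof (induction N)
  case 0
  then show ?case using B1 by simp
next
  case (Suc N)
  define SA where "SA = (\<Sum>t=2..Suc N. a t * c t)"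
  define SB where "SB = (\<Sum>t=2..Suc N. (B t - B (t-1)) * c t)"
  define S1 where "S1 = (\<Sum>s=2..Suc N. a s)"
  have IH: "SA + (B (Suc N) - S1) * c (Suc N) \<le> SB" using Suc unfolding SA_def SB_def S1_def by simp
  have "S1 \<le> B (Suc N)" unfolding S1_def by (rule hyp[rule_format]) (use Suc.prems in auto)
  then have nn: "B (Suc N) - S1 \<ge> 0" by simp
  have pr: "(B (Suc N) - S1) * c (Suc (Suc N)) \<le> (B (Suc N) - S1) * c (Suc N)"
    using nn cm by (intro mult_left_mono) auto
  have e1: "(\<Sum>t=2..Suc (Suc N). a t * c t) = SA + a (Suc (Suc N)) * c (Suc (Suc N))"
    unfolding SA_def by simp
  have e2: "(\<Sum>t=2..Suc (Suc N). (B t - B (t-1)) * c t) = SB + (B (Suc (Suc N)) - B (Suc N)) * c (Suc (Suc N))"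
    unfolding SB_def by simp
  have e3: "(\<Sum>s=2..Suc (Suc N). a s) = S1 + a (Suc (Suc N))" unfolding S1_def by simp
  have alg: "SA + a (Suc (Suc N)) * c (Suc (Suc N)) + (B (Suc (Suc N)) - (S1 + a (Suc (Suc N)))) * c (Suc (Suc N))
     = SA + (B (Suc N) - S1) * c (Suc (Suc N)) + (B (Suc (Suc N)) - B (Suc N)) * c (Suc (Suc N))"
    by (simp add: algebra_simps)
  show ?case unfolding e1 e2 e3 alg using IH pr by linarith
qed

lemma abel:
  fixes a B c :: "nat \<Rightarrow> real"
  assumes cm: "\<forall>t. 1 \<le> t \<longrightarrow> c (Suc t) \<le> c t" and cn: "\<forall>t. 0 \<le> c t" and B1: "B 1 = 0"
    and hyp: "\<forall>t. 1 \<le> t \<longrightarrow> t \<le> T \<longrightarrow> (\<Sum>s=2..t. a s) \<le> B t" and T1: "1 \<le> T"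
  shows "(\<Sum>t=2..T. a t * c t) \<le> (\<Sum>t=2..T. (B t - B (t-1)) * c t)"
proof -
  obtain N where N: "T = Suc N" using T1 by (cases T) auto
  have "(\<Sum>t=2..T. a t * c t) + (B T - (\<Sum>s=2..T. a s)) * c T \<le> (\<Sum>t=2..T. (B t - B (t-1)) * c t)"
    using abel_aux[OF cm B1 hyp, of N] N by simp
  moreover have "(B T - (\<Sum>s=2..T. a s)) * c T \<ge> 0" using hyp T1 cn by auto
  ultimately show ?thesis by linarith
qed

definition At :: "nat \<Rightarrow> real" where
  "At t = (1 / real t) * (\<Sum>k = alpha_idx t..beta_idx t. 1 / real k)"

lemma constA_At: "const_A = infsum At {2..}"
  unfolding const_A_def At_def by simp

lemma At_nonneg: "At t \<ge> 0" unfolding At_def by (intro mult_nonneg_nonneg sum_nonneg) auto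

lemma At_bound: assumes "t \<ge> 2" shows "At t \<le> 2 / (real t * (real t - 1))"
proof -
  note ab = ab_facts[OF assms]
  have "(\<Sum>k = alpha_idx t..beta_idx t. 1 / real k) \<le> real (card {alpha_idx t..beta_idx t}) * (1 / real (alpha_idx t))"
    using ab(1) by (intro sum_bounded_above) (auto simp: frac_le)
  also have "card {alpha_idx t..beta_idx t} = t" using ab(2) ab(1) assms by simp
  finally have s: "(\<Sum>k = alpha_idx t..beta_idx t. 1 / real k) \<le> real t * (1 / real (alpha_idx t))" .
  have "real (alpha_idx t) = real t * (real t - 1) / 2"
    using arg_cong[OF ab(4), of real] assms by (simp add: of_nat_diff)
  moreover have "real t > 0" using assms by simp
  ultimately have al: "real (alpha_idx t) = real t * (real t - 1) / 2" "real t > 0" by auto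
  have "At t \<le> (1/real t) * (real t * (1/real (alpha_idx t)))"
    unfolding At_def using s by (intro mult_left_mono) auto
  also have "\<dots> = 1/real (alpha_idx t)" using al(2) by simp
  also have "\<dots> = 2/(real t * (real t - 1))" unfolding al(1) by simp
  finally show ?thesis .
qed

lemma At_partial: "(\<Sum>t=2..T. At t) \<le> 2"
proof -
  have "(\<Sum>t=2..T. At t) \<le> (\<Sum>t=2..T. 2 * (1 / (real t * (real t - 1))))"
    using At_bound by (intro sum_mono) auto
  also have "\<dots> = 2 * (\<Sum>t=2..T. 1 / (real t * (real t - 1)))" by (simp add: sum_distrib_left)
  also have "\<dots> \<le> 2 * (1 / (real (2::nat) - 1))" using tele[of 2 T] by simp
  finally show ?thesis by simp
qed

lemma At_summable: "At summable_on {2..}"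
proof (rule nonneg_bdd_above_summable_on)
  show "\<And>x. x \<in> {2..} \<Longrightarrow> 0 \<le> At x" using At_nonneg by blast
  show "bdd_above (sum At ` {F. F \<subseteq> {2..} \<and> finite F})"
  proof (rule bdd_aboveI2)
    fix F :: "nat set" assume "F \<in> {F. F \<subseteq> {2..} \<and> finite F}"
    then have F: "F \<subseteq> {2..}" "finite F" by auto
    have "F \<subseteq> {2..Max F}" using F by (auto intro: Max_ge)
    then have "sum At F \<le> (\<Sum>t=2..Max F. At t)" using At_nonneg by (intro sum_mono2) auto
    also have "\<dots> \<le> 2" by (rule At_partial)
    finally show "sum At F \<le> 2" .
  qed
qed

lemma At_le_A: "(\<Sum>t=2..T. At t) \<le> const_A"
  unfolding constA_At using At_summable At_nonneg
  by (intro finite_sum_le_infsum) auto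

lemma A_ge: "const_A \<ge> 3/4"
proof -
  have "alpha_idx 2 = 1" "beta_idx 2 = 2" by (simp_all add: alpha_idx_def beta_idx_def)
  moreover have "{1..2::nat} = {1,2}" by auto
  ultimately have "At 2 = 3/4" unfolding At_def by simp
  moreover have "(\<Sum>t=2..2. At t) \<le> const_A" by (rule At_le_A)
  ultimately show ?thesis by simp
qed


lemma sum_2_t_aux: "1 \<le> (t::nat) \<Longrightarrow> 2 * (\<Sum>s=2..t. s) + 2 = t * t + t"
proof (induction t)
  case 0
  then show ?case by simp
next
  case (Suc t)
  show ?case
  proof (cases "t = 0")
    case True
    then show ?thesis by simp
  next
    case False
    then have "2 * (\<Sum>s=2..t. s) + 2 = t * t + t" using Suc by simp
    moreover have "(\<Sum>s=2..Suc t. s) = (\<Sum>s=2..t. s) + Suc t" using False by simp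
    ultimately show ?thesis by (simp add: algebra_simps)
  qed
qed

lemma sum_2_t: "1 \<le> (t::nat) \<Longrightarrow> (\<Sum>s=2..t. s) = beta_idx t"
proof -
  assume t: "1 \<le> t"
  have "t^2 + t = 2 * (\<Sum>s=2..t. s) + 2" using sum_2_t_aux[OF t] by (simp add: power2_eq_square)
  then show ?thesis unfolding beta_idx_def by simp
qed

lemma HH_diff: "a \<le> b \<Longrightarrow> HH b = HH a + (\<Sum>k=Suc a..b. 1/real k)"
proof -
  assume ab: "a \<le> b"
  have "HH (a + (b - a)) = HH a + (\<Sum>k=a+1..a+(b-a). 1/real k)"
    unfolding HH_def by (rule sum.ub_add_nat) simp
  then show ?thesis using ab by simp
qed

lemma comb:
  fixes F :: "'a set" and mu j :: "'a \<Rightarrow> nat"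
  assumes fin: "finite F" and mu2: "\<forall>x\<in>F. mu x \<ge> 2" and inj: "inj_on j F"
    and j1: "\<forall>x\<in>F. j x \<ge> 1" and cnt: "\<forall>t. card {x\<in>F. mu x = t} \<le> t"
  shows "(\<Sum>x\<in>F. 1/(real (mu x) * real (j x))) \<le> const_A"
proof (cases "F = {}")
  case True
  then show ?thesis using A_ge by simp
next
  case False
  define T where "T = Max (mu ` F)"
  have muT: "\<forall>x\<in>F. mu x \<le> T" unfolding T_def using fin by auto
  obtain x0 where "x0 \<in> F" using False by blast
  then have T2: "T \<ge> 2" using muT mu2 by force
  define a :: "nat \<Rightarrow> real" where "a t = (\<Sum>x\<in>{x\<in>F. mu x = t}. 1/real (j x))" for t
  define c :: "nat \<Rightarrow> real" where "c t = 1/real t" for t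
  define B :: "nat \<Rightarrow> real" where "B t = HH (beta_idx t)" for t
  have img: "mu ` F \<subseteq> {2..T}" using muT mu2 by auto
  have "(\<Sum>x\<in>F. 1/(real (mu x) * real (j x))) = (\<Sum>t\<in>{2..T}. \<Sum>x\<in>{x\<in>F. mu x = t}. 1/(real (mu x) * real (j x)))"
    using sum.group[OF fin _ img, of "\<lambda>x. 1/(real (mu x) * real (j x))"] by simp
  also have "\<dots> = (\<Sum>t=2..T. a t * c t)"
  proof (rule sum.cong[OF refl])
    fix t
    have "(\<Sum>x\<in>{x\<in>F. mu x = t}. 1/(real (mu x) * real (j x))) = (\<Sum>x\<in>{x\<in>F. mu x = t}. 1/real (j x) * (1/real t))"
      by (intro sum.cong) auto
    also have "(\<Sum>x\<in>{x\<in>F. mu x = t}. 1/real (j x) * (1/real t)) = (\<Sum>x\<in>{x\<in>F. mu x = t}. 1/real (j x)) * (1/real t)"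
      by (rule sum_distrib_right[symmetric])
    finally show "(\<Sum>x\<in>{x\<in>F. mu x = t}. 1/(real (mu x) * real (j x))) = a t * c t"
      unfolding a_def c_def .
  qed
  finally have eq1: "(\<Sum>x\<in>F. 1/(real (mu x) * real (j x))) = (\<Sum>t=2..T. a t * c t)" .
  have Sb: "\<forall>t. 1 \<le> t \<longrightarrow> t \<le> T \<longrightarrow> (\<Sum>s=2..t. a s) \<le> B t"
  proof (intro allI impI)
    fix t assume t1: "1 \<le> t" and tT: "t \<le> T"
    define G where "G = {x\<in>F. mu x \<le> t}"
    have finG: "finite G" using fin G_def by simp
    have imgG: "mu ` G \<subseteq> {2..t}" using mu2 G_def by auto
    have "(\<Sum>x\<in>G. 1/real (j x)) = (\<Sum>s\<in>{2..t}. \<Sum>x\<in>{x\<in>G. mu x = s}. 1/real (j x))"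
      using sum.group[OF finG _ imgG, of "\<lambda>x. 1/real (j x)"] by simp
    also have "\<dots> = (\<Sum>s=2..t. a s)"
    proof (rule sum.cong[OF refl])
      fix s assume "s \<in> {2..t}"
      then have "{x\<in>G. mu x = s} = {x\<in>F. mu x = s}" unfolding G_def by auto
      then show "(\<Sum>x\<in>{x\<in>G. mu x = s}. 1/real (j x)) = a s" unfolding a_def by simp
    qed
    finally have e1: "(\<Sum>s=2..t. a s) = (\<Sum>x\<in>G. 1/real (j x))" by simp
    have injG: "inj_on j G" using inj G_def by (auto intro: inj_on_subset)
    have e2: "(\<Sum>x\<in>G. 1/real (j x)) = (\<Sum>k\<in>j ` G. 1/real k)"
      using sum.reindex[OF injG, of "\<lambda>k. 1/real k"] by simp
    have "0 \<notin> j ` G" using j1 G_def by force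
    then have e3: "(\<Sum>k\<in>j ` G. 1/real k) \<le> HH (card (j ` G))" using harm finG by blast
    have e4: "card (j ` G) = card G" using card_image[OF injG] .
    have "G = (\<Union>s\<in>{2..t}. {x\<in>F. mu x = s})" unfolding G_def using mu2 by auto
    then have "card G \<le> (\<Sum>s\<in>{2..t}. card {x\<in>F. mu x = s})" using card_UN_le[of "{2..t}"] by simp
    also have "\<dots> \<le> (\<Sum>s\<in>{2..t}. s)" using cnt by (intro sum_mono) auto
    also have "\<dots> = beta_idx t" using sum_2_t[OF t1] by simp
    finally have "HH (card G) \<le> B t" unfolding B_def by (rule HH_mono)
    then show "(\<Sum>s=2..t. a s) \<le> B t" using e1 e2 e3 e4 by simp
  qed
  have B1: "B 1 = 0" unfolding B_def HH_def beta_idx_def by simp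
  have cm: "\<forall>t. 1 \<le> t \<longrightarrow> c (Suc t) \<le> c t" unfolding c_def by (auto simp: frac_le)
  have cn: "\<forall>t. 0 \<le> c t" unfolding c_def by simp
  have "(\<Sum>t=2..T. a t * c t) \<le> (\<Sum>t=2..T. (B t - B (t-1)) * c t)"
    using abel[OF cm cn B1 Sb] T2 by simp
  also have "\<dots> = (\<Sum>t=2..T. At t)"
  proof (rule sum.cong[OF refl])
    fix t assume "t \<in> {2..T}"
    then have t2: "t \<ge> 2" by simp
    note ab = ab_facts[OF t2]
    have le: "beta_idx (t-1) \<le> beta_idx t" using ab by simp
    have "B t - B (t-1) = (\<Sum>k=Suc (beta_idx (t-1))..beta_idx t. 1/real k)"
      unfolding B_def using HH_diff[OF le] by simp
    also have "Suc (beta_idx (t-1)) = alpha_idx t" using ab(3) by simp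
    finally show "(B t - B (t-1)) * c t = At t" unfolding At_def c_def by simp
  qed
  also have "\<dots> \<le> const_A" by (rule At_le_A)
  finally show ?thesis using eq1 by simp
qed

lemma inv_sq_finite: assumes "finite S" "0 \<notin> S"
  shows "(\<Sum>n\<in>S. 1/(real n)^2) \<le> pi^2/6"
proof -
  let ?g = "\<lambda>n::nat. 1 / real ((n + 1)^2)"
  have inj: "inj_on (\<lambda>n. n - 1) S"
  proof (rule inj_onI)
    fix x y assume xy: "x \<in> S" "y \<in> S" "x - 1 = y - 1"
    have "x \<noteq> 0" using xy(1) assms(2) by metis
    moreover have "y \<noteq> 0" using xy(2) assms(2) by metis
    ultimately show "x = y" using xy(3) by arith
  qed
  have "(\<Sum>m\<in>(\<lambda>n. n - 1) ` S. ?g m) = (\<Sum>n\<in>S. ?g (n - 1))" using sum.reindex[OF inj] by simp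
  also have "\<dots> = (\<Sum>n\<in>S. 1/(real n)^2)"
  proof (rule sum.cong[OF refl])
    fix n assume "n \<in> S"
    then have "n - 1 + 1 = n" using assms(2) by (cases n) auto
    then show "?g (n - 1) = 1/(real n)^2" by simp
  qed
  finally have e: "(\<Sum>n\<in>S. 1/(real n)^2) = (\<Sum>m\<in>(\<lambda>n. n - 1) ` S. ?g m)" by simp
  have sm: "summable ?g" using inverse_squares_sums by (rule sums_summable)
  have "(\<Sum>m\<in>(\<lambda>n. n - 1) ` S. ?g m) \<le> suminf ?g"
    using sm assms(1) by (intro sum_le_suminf) auto
  also have "suminf ?g = pi^2/6" using inverse_squares_sums by (rule sums_unique[symmetric])
  finally show ?thesis using e by simp
qed

lemma sq_bound: fixes P :: "nat set" and k :: "nat \<Rightarrow> nat" and q :: nat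
  assumes fin: "finite P" and inj: "inj_on k P"
    and kp: "\<forall>p\<in>P. k p \<ge> 1 \<and> real p \<ge> real (k p) * real q" and q1: "q \<ge> 1"
  shows "(\<Sum>p\<in>P. 1/(real p)^2) \<le> pi^2/6 / (real q)^2"
proof -
  have "(\<Sum>p\<in>P. 1/(real p)^2) \<le> (\<Sum>p\<in>P. (1/(real q)^2) * (1/(real (k p))^2))"
  proof (rule sum_mono)
    fix p assume p: "p \<in> P"
    have "k p \<ge> 1" using kp p by blast
    then have pos: "real (k p) * real q > 0" using q1 by (intro mult_pos_pos) auto
    have "(real (k p) * real q)^2 \<le> (real p)^2" using kp p pos by (intro power_mono) auto
    moreover have "0 < (real (k p) * real q)^2" using pos by (rule zero_less_power)
    ultimately have "1/(real p)^2 \<le> 1/(real (k p) * real q)^2" by (intro frac_le) auto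
    moreover have "1/(real (k p) * real q)^2 = (1/(real q)^2) * (1/(real (k p))^2)"
      by (simp add: power_mult_distrib mult.commute[of "(real (k p))^2" "(real q)^2"])
    ultimately show "1/(real p)^2 \<le> (1/(real q)^2) * (1/(real (k p))^2)" by simp
  qed
  also have "\<dots> = (1/(real q)^2) * (\<Sum>p\<in>P. 1/(real (k p))^2)" by (simp add: sum_distrib_left)
  finally have s1: "(\<Sum>p\<in>P. 1/(real p)^2) \<le> (1/(real q)^2) * (\<Sum>p\<in>P. 1/(real (k p))^2)" .
  have s2: "(\<Sum>p\<in>P. 1/(real (k p))^2) = (\<Sum>n\<in>k ` P. 1/(real n)^2)"
    using sum.reindex[OF inj, of "\<lambda>n. 1/(real n)^2"] by simp
  have f: "finite (k ` P)" using fin by simp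
  have z: "0 \<notin> k ` P" using kp by force
  have s3: "(\<Sum>n\<in>k ` P. 1/(real n)^2) \<le> pi^2/6" using inv_sq_finite[OF f z] .
  have "(1/(real q)^2) * (\<Sum>n\<in>k ` P. 1/(real n)^2) \<le> (1/(real q)^2) * (pi^2/6)"
    using s3 by (intro mult_left_mono) auto
  moreover have "(1/(real q)^2)*(pi^2/6) = pi^2/6/(real q)^2" by simp
  moreover have "(\<Sum>p\<in>P. 1/(real p)^2) \<le> (1/(real q)^2) * (\<Sum>n\<in>k ` P. 1/(real n)^2)"
    using s1 unfolding s2 .
  ultimately show ?thesis by linarith
qed



lemma pp_inj: assumes "prime (p::nat)" "prime p'" "m \<ge> 1" "m' \<ge> 1" "p ^ m = p' ^ m'"
  shows "p = p' \<and> m = m'"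
proof -
  have "p dvd p ^ m" using assms(3) by (intro dvd_power) simp
  then have "p dvd p' ^ m'" using assms(5) by simp
  then have "p dvd p'" using prime_dvd_power[OF assms(1)] by blast
  then have pp: "p = p'" using primes_dvd_imp_eq[OF assms(1,2)] by blast
  have "p > 1" using assms(1) prime_gt_1_nat by blast
  then have "m = m'" using assms(5) pp by simp
  then show ?thesis using pp by simp
qed

lemma cong1_dvd: assumes "[(n::nat) = 1] (mod q)" "n \<ge> 1" shows "q dvd n - 1"
  using cong_altdef_nat[of 1 n q] assms by simp

context prq
begin

lemma E1_bound:
  assumes fin: "finite E"
    and E: "\<forall>x\<in>E. prime (fst x) \<and> fst x < q \<and> snd x \<ge> 2 \<and> [fst x ^ snd x = 1] (mod q)"
  shows "(\<Sum>x\<in>E. wt x) \<le> const_A / real q"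
proof -
  define j where "j x = (fst x ^ snd x - 1) div q" for x :: "nat \<times> nat"
  have q0: "q > 0" using q_gt1 by simp
  have big: "fst x ^ snd x \<ge> 2" if "x \<in> E" for x
  proof -
    have p2: "fst x \<ge> 2" using E that prime_ge_2_nat by blast
    have "snd x > 0" using E that by auto
    then have "fst x \<le> fst x ^ snd x" using p2 by (intro self_le_power) auto
    then show ?thesis using p2 by linarith
  qed
  have pm: "fst x ^ snd x = q * j x + 1" if "x \<in> E" for x
  proof -
    have "fst x ^ snd x \<ge> 1" using big[OF that] by simp
    then have "q dvd fst x ^ snd x - 1" using cong1_dvd E that by blast
    then have "fst x ^ snd x - 1 = q * j x" unfolding j_def by simp
    then show ?thesis using \<open>fst x ^ snd x \<ge> 1\<close> by simp
  qed
  have j1: "\<forall>x\<in>E. j x \<ge> 1"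
  proof
    fix x assume x: "x \<in> E"
    show "j x \<ge> 1" using pm[OF x] big[OF x] by (cases "j x") auto
  qed
  have jinj: "inj_on j E"
  proof (rule inj_onI)
    fix x y assume x: "x \<in> E" and y: "y \<in> E" and e: "j x = j y"
    have "fst x ^ snd x = fst y ^ snd y" using pm[OF x] pm[OF y] e by simp
    moreover have "prime (fst x)" "prime (fst y)" "snd x \<ge> 1" "snd y \<ge> 1" using E x y by auto
    ultimately have "fst x = fst y \<and> snd x = snd y" using pp_inj by blast
    then show "x = y" by (simp add: prod_eq_iff)
  qed
  have cnt: "\<forall>t. card {x\<in>E. snd x = t} \<le> t"
  proof
    fix t
    show "card {x\<in>E. snd x = t} \<le> t"
    proof (cases "t = 0")
      case True
      then have e: "{x\<in>E. snd x = t} = {}" using E by auto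
      show ?thesis by (simp only: e card.empty)
    next
      case False
      let ?S = "{x\<in>E. snd x = t}"
      have inj: "inj_on (\<lambda>x. chi1 (fst x)) ?S"
      proof (rule inj_onI)
        fix x y assume x: "x \<in> ?S" and y: "y \<in> ?S" and e: "chi1 (fst x) = chi1 (fst y)"
        have "fst x \<in> {1..<q}" "fst y \<in> {1..<q}" using E x y prime_ge_1_nat by auto
        then have "fst x = fst y" using chi1_inj e unfolding inj_on_def by blast
        moreover have "snd x = snd y" using x y by simp
        ultimately show "x = y" by (simp add: prod_eq_iff)
      qed
      have sub: "(\<lambda>x. chi1 (fst x)) ` ?S \<subseteq> {z. z ^ t = 1}"
      proof
        fix z assume "z \<in> (\<lambda>x. chi1 (fst x)) ` ?S"
        then obtain x where x: "x \<in> ?S" "z = chi1 (fst x)" by blast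
        have "[fst x ^ t = 1] (mod q)" using E x by auto
        then have "chi1 (fst x ^ t) = chi1 1" using dc_cong[OF chi1_dc] by blast
        then have "chi1 (fst x) ^ t = 1" using dc_pow[OF chi1_dc] dc_one[OF chi1_dc] by simp
        then show "z \<in> {z. z ^ t = 1}" using x by simp
      qed
      have fr: "finite {z::complex. z ^ t = 1}" using False by (intro finite_roots_unity) simp
      have "card ?S \<le> card {z::complex. z ^ t = 1}" using card_inj_on_le[OF inj sub fr] .
      also have "\<dots> = t" using False by (intro card_roots_unity_eq) simp
      finally show ?thesis .
    qed
  qed
  have mu2: "\<forall>x\<in>E. snd x \<ge> 2" using E by blast
  have C: "(\<Sum>x\<in>E. 1/(real (snd x) * real (j x))) \<le> const_A"
    using comb[OF fin mu2 jinj j1 cnt] .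
  have "(\<Sum>x\<in>E. wt x) \<le> (\<Sum>x\<in>E. (1/real q) * (1/(real (snd x) * real (j x))))"
  proof (rule sum_mono)
    fix x assume x: "x \<in> E"
    have m0: "real (snd x) > 0" using E x by auto
    have j0: "real (j x) > 0" using j1 x by auto
    have pos: "0 < real (snd x) * (real q * real (j x))" using m0 j0 q0 by simp
    have "real (fst x) ^ snd x = real q * real (j x) + 1"
      using pm[OF x] by (metis of_nat_add of_nat_mult of_nat_power of_nat_1)
    then have le: "real (snd x) * (real q * real (j x)) \<le> real (snd x) * real (fst x) ^ snd x"
      using m0 by (intro mult_left_mono) auto
    have "wt x \<le> 1 / (real (snd x) * (real q * real (j x)))"
      unfolding wt_def using pos le by (intro frac_le) auto
    also have "\<dots> = (1/real q) * (1/(real (snd x) * real (j x)))" by simp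
    finally show "wt x \<le> (1/real q) * (1/(real (snd x) * real (j x)))" .
  qed
  also have "\<dots> = (1/real q) * (\<Sum>x\<in>E. 1/(real (snd x) * real (j x)))" by (simp add: sum_distrib_left)
  also have "\<dots> \<le> (1/real q) * const_A" using C by (intro mult_left_mono) auto
  finally show ?thesis by simp
qed

end

lemma sq_minus_1: "(p::nat) \<ge> 1 \<Longrightarrow> p^2 - 1 = (p - 1) * (p + 1)"
proof -
  assume "p \<ge> 1"
  then obtain r where r: "p = Suc r" by (cases p) auto
  show ?thesis unfolding r by (simp add: power2_eq_square algebra_simps)
qed

lemma E2_bound:
  assumes qp: "prime q" and fin: "finite E"
    and E: "\<forall>x\<in>E. prime (fst x) \<and> fst x > q \<and> snd x = 2 \<and> [fst x ^ snd x = 1] (mod q)"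
  shows "(\<Sum>x\<in>E. wt x) \<le> pi^2/6/(real q)^2"
proof -
  have q1: "q \<ge> 1" using qp prime_ge_1_nat by blast
  let ?P = "fst ` E"
  let ?g = "\<lambda>p::nat. 1/(2 * (real p)^2)"
  have injf: "inj_on fst E" using E by (auto simp: inj_on_def prod_eq_iff)
  have e1: "(\<Sum>x\<in>E. wt x) = (\<Sum>p\<in>?P. ?g p)"
  proof -
    have "(\<Sum>p\<in>?P. ?g p) = (\<Sum>x\<in>E. ?g (fst x))" using sum.reindex[OF injf, of ?g] by simp
    also have "\<dots> = (\<Sum>x\<in>E. wt x)" using E by (intro sum.cong) (auto simp: wt_def)
    finally show ?thesis by simp
  qed
  have dv: "q dvd p - 1 \<or> q dvd p + 1" if pP: "p \<in> ?P" for p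
  proof -
    obtain x where x: "x \<in> E" "p = fst x" using pP by blast
    have p1: "p \<ge> 1" using E x prime_ge_1_nat by blast
    have "[p^2 = 1] (mod q)" using E x by auto
    then have "q dvd p^2 - 1" using cong1_dvd p1 by simp
    then have "q dvd (p - 1) * (p + 1)" using sq_minus_1[OF p1] by simp
    then show ?thesis using prime_dvd_mult_iff[OF qp] by blast
  qed
  have pgt: "p > q" if "p \<in> ?P" for p using E that by auto
  define Pa where "Pa = {p\<in>?P. q dvd p - 1}"
  define Pb where "Pb = {p\<in>?P. \<not> q dvd p - 1}"
  have finP: "finite ?P" using fin by simp
  have PU: "?P = Pa \<union> Pb" "Pa \<inter> Pb = {}" unfolding Pa_def Pb_def by auto
  have fa: "finite Pa" "finite Pb" using finP unfolding Pa_def Pb_def by auto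
  have ba: "(\<Sum>p\<in>Pa. 1/(real p)^2) \<le> pi^2/6/(real q)^2"
  proof (rule sq_bound[where k = "\<lambda>p. (p - 1) div q"])
    show "finite Pa" by (rule fa(1))
    show "q \<ge> 1" by (rule q1)
    show "inj_on (\<lambda>p. (p - 1) div q) Pa"
    proof (rule inj_onI)
      fix x y assume x: "x \<in> Pa" and y: "y \<in> Pa" and e: "(x - 1) div q = (y - 1) div q"
      have "x - 1 = q * ((x - 1) div q)" "y - 1 = q * ((y - 1) div q)" using x y unfolding Pa_def by auto
      then have "x - 1 = y - 1" using e by simp
      moreover have "x > 0" "y > 0" using pgt x y unfolding Pa_def by fastforce+
      ultimately show "x = y" by arith
    qed
    show "\<forall>p\<in>Pa. 1 \<le> (p - 1) div q \<and> real ((p - 1) div q) * real q \<le> real p"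
    proof
      fix p assume p: "p \<in> Pa"
      have d: "p - 1 = q * ((p - 1) div q)" using p unfolding Pa_def by auto
      have "p > q" using pgt p unfolding Pa_def by auto
      have nz: "(p - 1) div q \<noteq> 0"
      proof
        assume "(p - 1) div q = 0"
        then have "p - 1 = 0" using d by simp
        then show False using \<open>p > q\<close> q1 by simp
      qed
      have "(p - 1) div q * q = p - 1" using d by (simp only: mult.commute[of "(p-1) div q" q])
      then have le: "(p - 1) div q * q \<le> p" by simp
      have A: "1 \<le> (p - 1) div q" using nz by simp
      have B: "real ((p - 1) div q) * real q \<le> real p" using le by (metis of_nat_le_iff of_nat_mult)
      show "1 \<le> (p - 1) div q \<and> real ((p - 1) div q) * real q \<le> real p" using A B by simp
    qed
  qed
  have dvb: "p + 1 = q * ((p + 1) div q)" if "p \<in> Pb" for p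
    using dv[of p] that unfolding Pb_def by auto
  have l2: "(p + 1) div q \<ge> 2" if "p \<in> Pb" for p
  proof -
    have "p > q" using pgt that unfolding Pb_def by auto
    then have "q * 1 < q * ((p + 1) div q)" using dvb[OF that] by simp
    then have "1 < (p + 1) div q" using mult_less_cancel1[of q 1 "(p+1) div q"] by simp
    then show ?thesis by simp
  qed
  have bb: "(\<Sum>p\<in>Pb. 1/(real p)^2) \<le> pi^2/6/(real q)^2"
  proof (rule sq_bound[where k = "\<lambda>p. (p + 1) div q - 1"])
    show "finite Pb" by (rule fa(2))
    show "q \<ge> 1" by (rule q1)
    show "inj_on (\<lambda>p. (p + 1) div q - 1) Pb"
    proof (rule inj_onI)
      fix x y assume x: "x \<in> Pb" and y: "y \<in> Pb" and e: "(x + 1) div q - 1 = (y + 1) div q - 1"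
      have "(x + 1) div q = (y + 1) div q" using e l2[OF x] l2[OF y] by arith
      then have "x + 1 = y + 1" using dvb[OF x] dvb[OF y] by simp
      then show "x = y" by simp
    qed
    show "\<forall>p\<in>Pb. 1 \<le> (p + 1) div q - 1 \<and> real ((p + 1) div q - 1) * real q \<le> real p"
    proof
      fix p assume p: "p \<in> Pb"
      define l where "l = (p + 1) div q"
      have d: "p + 1 = q * l" using dvb[OF p] l_def by simp
      have l2': "l \<ge> 2" using l2[OF p] l_def by simp
      have A: "1 \<le> l - 1" using l2' by simp
      have "(l - 1) * q = q * l - q" by (simp add: algebra_simps)
      also have "\<dots> \<le> p" using d q1 by simp
      finally have "(l - 1) * q \<le> p" .
      then have B: "real (l - 1) * real q \<le> real p" by (metis of_nat_le_iff of_nat_mult)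
      show "1 \<le> (p + 1) div q - 1 \<and> real ((p + 1) div q - 1) * real q \<le> real p"
        using A B l_def by simp
    qed
  qed
  have "(\<Sum>p\<in>?P. ?g p) = (\<Sum>p\<in>Pa. ?g p) + (\<Sum>p\<in>Pb. ?g p)"
    unfolding PU(1) using sum.union_disjoint[OF fa PU(2)] by simp
  also have "(\<Sum>p\<in>Pa. ?g p) = (1/2) * (\<Sum>p\<in>Pa. 1/(real p)^2)" by (simp add: sum_distrib_left)
  also have "(\<Sum>p\<in>Pb. ?g p) = (1/2) * (\<Sum>p\<in>Pb. 1/(real p)^2)" by (simp add: sum_distrib_left)
  finally have "(\<Sum>p\<in>?P. ?g p) = (1/2) * (\<Sum>p\<in>Pa. 1/(real p)^2) + (1/2) * (\<Sum>p\<in>Pb. 1/(real p)^2)" .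
  then show ?thesis using e1 ba bb by linarith
qed

lemma E3_bound:
  assumes q2: "q \<ge> 2" and fin: "finite E" and E: "\<forall>x\<in>E. fst x > q \<and> snd x \<ge> 3"
  shows "(\<Sum>x\<in>E. wt x) \<le> 1/(3 * (real q)^2)"
proof -
  have "(\<Sum>x\<in>E. wt x) \<le> (1/real (3::nat)) * (1/real (q+1))^(3-2) * (1/(real (q+1) - 1))"
    using E q2 by (intro box_bound fin) auto
  also have "\<dots> = 1/(3 * (real q + 1) * real q)" by simp
  also have "\<dots> \<le> 1/(3 * real q * real q)" using q2 by (intro frac_le) auto
  finally show ?thesis by (simp add: power2_eq_square mult.assoc)
qed


definition PS :: "(nat \<times> nat) set" where "PS = Sigma {p. prime p} (\<lambda>_. {2..})"

lemma PS_fin_bound: assumes "finite F" "F \<subseteq> PS" shows "sum wt F \<le> 1/2"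
proof -
  have "\<forall>x\<in>F. fst x \<ge> 2 \<and> snd x \<ge> 2" using assms(2) prime_ge_2_nat unfolding PS_def by auto
  then have "sum wt F \<le> (1/real (2::nat)) * (1/real (2::nat))^(2-2) * (1/(real (2::nat) - 1))"
    using assms(1) by (intro box_bound) auto
  then show ?thesis by simp
qed

lemma wt_summable: "wt summable_on PS"
proof (rule nonneg_bdd_above_summable_on)
  show "\<And>x. x \<in> PS \<Longrightarrow> 0 \<le> wt x" using wt_nonneg by blast
  show "bdd_above (sum wt ` {F. F \<subseteq> PS \<and> finite F})"
    using PS_fin_bound by (intro bdd_aboveI2[of _ _ "1/2"]) auto
qed

lemma sub_summable: assumes "\<forall>x\<in>PS. 0 \<le> g x \<and> g x \<le> wt x" shows "g summable_on PS"
  using summable_on_comparison_test[OF wt_summable] assms by blast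

lemma fc_summable: assumes "prime q" "dirichlet_character q chi"
  shows "(\<lambda>x. chi (fst x ^ snd x) / (of_nat (snd x) * of_nat (fst x ^ snd x))) summable_on PS"
proof (rule abs_summable_summable)
  let ?f = "\<lambda>x. chi (fst x ^ snd x) / (of_nat (snd x) * of_nat (fst x ^ snd x))"
  have "\<forall>x\<in>PS. 0 \<le> norm (?f x) \<and> norm (?f x) \<le> wt x"
  proof
    fix x assume "x \<in> PS"
    have n: "norm (chi (fst x ^ snd x)) \<le> 1" using dc_norm[OF assms] .
    have "norm (?f x) = norm (chi (fst x ^ snd x)) / (real (snd x) * real (fst x ^ snd x))"
      by (simp add: norm_divide norm_mult norm_power)
    also have "\<dots> \<le> 1 / (real (snd x) * real (fst x ^ snd x))"
      using n by (intro divide_right_mono) auto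
    also have "\<dots> = wt x" unfolding wt_def by simp
    finally show "0 \<le> norm (?f x) \<and> norm (?f x) \<le> wt x" by simp
  qed
  then show "(\<lambda>x. norm (?f x)) summable_on PS" by (rule sub_summable)
qed

lemma nested: fixes h :: "nat \<times> nat \<Rightarrow> complex" assumes "h summable_on PS"
  shows "infsum (\<lambda>p. infsum (\<lambda>m. h (p, m)) {2..}) {p. prime p} = infsum h PS"
  using infsum_Sigma_banach[of h "{p. prime p}" "\<lambda>_. {2..}"] assms unfolding PS_def by simp

lemma finite_infsum_sum:
  fixes f :: "'i \<Rightarrow> 'a \<Rightarrow> complex"
  assumes "finite I" "\<forall>i\<in>I. f i summable_on A"
  shows "(\<Sum>i\<in>I. infsum (f i) A) = infsum (\<lambda>x. \<Sum>i\<in>I. f i x) A \<and> (\<lambda>x. \<Sum>i\<in>I. f i x) summable_on A"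
  using assms
proof (induction I rule: finite_induct)
  case empty
  then show ?case by simp
next
  case (insert i I)
  then have IH: "(\<Sum>i\<in>I. infsum (f i) A) = infsum (\<lambda>x. \<Sum>i\<in>I. f i x) A"
    "(\<lambda>x. \<Sum>i\<in>I. f i x) summable_on A" and fi: "f i summable_on A" by auto
  have "(\<Sum>i\<in>insert i I. infsum (f i) A) = infsum (f i) A + infsum (\<lambda>x. \<Sum>i\<in>I. f i x) A"
    using insert IH by simp
  also have "\<dots> = infsum (\<lambda>x. f i x + (\<Sum>i\<in>I. f i x)) A" using infsum_add[OF fi IH(2)] by simp
  also have "\<dots> = infsum (\<lambda>x. \<Sum>i\<in>insert i I. f i x) A" using insert by simp
  finally show ?case using summable_on_add[OF fi IH(2)] insert by simp
qed

lemma final_arith: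
  fixes Q A P cc S :: real
  assumes Q3: "Q \<ge> 3" and A: "A \<ge> 3/4" and P: "P > 0" and cc: "0 \<le> cc" "cc \<le> Q - 2"
    and S: "0 \<le> S" "S \<le> A / Q + P / Q^2 + 1 / (3 * Q^2)"
  shows "cc * S < A + (P - A) / Q"
proof -
  have Q0: "Q > 0" using Q3 by simp
  have "cc * S \<le> (Q - 2) * S" using cc S by (intro mult_right_mono) auto
  also have "\<dots> \<le> (Q - 2) * (A / Q + P / Q^2 + 1 / (3 * Q^2))" using S Q3 by (intro mult_left_mono) auto
  also have "\<dots> = A - 2 * A / Q + (Q - 2) / Q * ((P + 1/3) / Q)"
    using Q0 by (simp add: field_simps power2_eq_square)
  also have "(Q - 2) / Q * ((P + 1/3) / Q) \<le> 1 * ((P + 1/3) / Q)"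
    using Q0 P by (intro mult_right_mono) auto
  finally have "cc * S \<le> A - 2 * A / Q + (P + 1/3) / Q" by simp
  also have "\<dots> < A + (P - A) / Q"
  proof -
    have "A / Q - 1/(3*Q) > 0" using A Q0 by (simp add: field_simps)
    moreover have "A + (P - A) / Q - (A - 2 * A / Q + (P + 1/3) / Q) = A / Q - 1/(3*Q)"
      using Q0 by (simp add: field_simps)
    ultimately show ?thesis by linarith
  qed
  finally show ?thesis .
qed

lemma final_arith2:
  fixes Q A P S :: real
  assumes Q3: "Q \<ge> 3" and A: "A \<ge> 3/4" and P: "P > 0" and S: "S \<le> 1/2"
  shows "S < A + (P - A) / Q"
proof -
  have Q0: "Q > 0" using Q3 by simp
  have "A + (P - A) / Q = A * (1 - 1/Q) + P / Q" using Q0 by (simp add: field_simps)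
  moreover have "1 - 1/Q \<ge> 2/3" using Q3 by (simp add: field_simps)
  then have "A * (1 - 1/Q) \<ge> (3/4) * (2/3)" using A by (intro mult_mono) auto
  moreover have "P / Q > 0" using P Q0 by simp
  ultimately show ?thesis using S by linarith
qed


theorem mainTheorem6:
  fixes q :: nat
  assumes "prime q" and "odd q"
  shows "cmod (Sigma2 q) < const_A + (pi^2 / 6 - const_A) / real q"
proof -
  obtain g where g: "residue_primroot q g" using primroot_exists[OF assms] by blast
  interpret prq q g using assms(1) g by unfold_locales
  have q3: "q \<ge> 3"
  proof -
    have "q \<ge> 2" using assms(1) prime_ge_2_nat by blast
    moreover have "q \<noteq> 2" using assms(2) by auto
    ultimately show ?thesis by simp
  qed
  define X where "X = {chi. dirichlet_character q chi \<and> chi \<noteq> principal_character q}"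
  have X: "X = DD - {principal_character q}" unfolding X_def by auto
  have finX: "finite X" unfolding X using D_finite_card(1) by simp
  define cc where "cc = real (card DD) - 1"
  define cf where "cf n = (if [n = 1] (mod q) then cc else if coprime n q then -1 else 0)" for n :: nat
  define hh where "hh x = wt x * cf (fst x ^ snd x)" for x :: "nat \<times> nat"
  define g1 where "g1 x = (if [fst x ^ snd x = 1] (mod q) then wt x else 0)" for x :: "nat \<times> nat"
  define g3 where "g3 x = (if \<not> [fst x ^ snd x = 1] (mod q) \<and> coprime (fst x ^ snd x) q then wt x else 0)"
    for x :: "nat \<times> nat"
  define fc where "fc chi x = chi (fst x ^ snd x) / (of_nat (snd x) * of_nat (fst x ^ snd x))"
    for chi :: "nat \<Rightarrow> complex" and x :: "nat \<times> nat"
  have hh_eq: "hh x = cc * g1 x + - g3 x" for x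
    unfolding hh_def cf_def g1_def g3_def by auto
  have cc_bounds: "0 \<le> cc" "cc \<le> real q - 2"
  proof -
    have "principal_character q \<in> DD" using principal_dc by simp
    then have "card DD \<ge> 1" using D_finite_card(1) by (metis One_nat_def card_gt_0_iff empty_iff Suc_leI)
    then show "0 \<le> cc" unfolding cc_def by simp
    have "card DD \<le> q - 1" by (rule D_finite_card(2))
    then have "real (card DD) \<le> real q - 1" using q3 by (simp add: of_nat_diff)
    then show "cc \<le> real q - 2" unfolding cc_def by simp
  qed
  have sumchi: "(\<Sum>chi\<in>X. chi n) = of_real (cf n)" for n
  proof (cases "[n = 1] (mod q)")
    case True
    then show ?thesis unfolding X cf_def cc_def using sumX_1 by simp
  next
    case False
    then show ?thesis
    proof (cases "coprime n q")
      case True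
      then show ?thesis unfolding X cf_def using sumX_2 False by simp
    next
      case c: False
      then show ?thesis unfolding X cf_def using sumX_3 False by simp
    qed
  qed
  have sumfc: "(\<Sum>chi\<in>X. fc chi x) = of_real (hh x)" for x
  proof -
    have d: "(of_nat (snd x) * of_nat (fst x ^ snd x) :: complex) = of_real (real (snd x) * real (fst x) ^ snd x)"
      by simp
    have "(\<Sum>chi\<in>X. fc chi x) = (\<Sum>chi\<in>X. chi (fst x ^ snd x)) / (of_nat (snd x) * of_nat (fst x ^ snd x))"
      unfolding fc_def by (simp add: sum_divide_distrib)
    also have "\<dots> = of_real (cf (fst x ^ snd x)) / of_real (real (snd x) * real (fst x) ^ snd x)"
      unfolding d sumchi ..
    also have "\<dots> = of_real (cf (fst x ^ snd x) / (real (snd x) * real (fst x) ^ snd x))"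
      by (simp only: of_real_divide)
    also have "cf (fst x ^ snd x) / (real (snd x) * real (fst x) ^ snd x) = hh x"
      unfolding hh_def wt_def by simp
    finally show ?thesis .
  qed
  have fcs: "\<forall>chi\<in>X. fc chi summable_on PS"
    using fc_summable[OF assms(1)] unfolding X_def fc_def by blast
  have "Sigma2 q = (\<Sum>chi\<in>X. infsum (fc chi) PS)"
    unfolding Sigma2_def X_def[symmetric]
  proof (rule sum.cong[OF refl])
    fix chi assume "chi \<in> X"
    then have "fc chi summable_on PS" using fcs by blast
    from nested[OF this] show "infsum (\<lambda>p. infsum (\<lambda>m. chi (p ^ m) / (of_nat m * of_nat (p ^ m))) {2..}) {p. prime p}
        = infsum (fc chi) PS" unfolding fc_def by simp
  qed
  also have "\<dots> = infsum (\<lambda>x. \<Sum>chi\<in>X. fc chi x) PS" using finite_infsum_sum[OF finX fcs] by blast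
  also have "\<dots> = infsum (\<lambda>x. of_real (hh x)) PS" using sumfc by simp
  finally have S2: "Sigma2 q = infsum (\<lambda>x. complex_of_real (hh x)) PS" .
  have g1s: "g1 summable_on PS" using wt_nonneg unfolding g1_def by (intro sub_summable) auto
  have g3s: "g3 summable_on PS" using wt_nonneg unfolding g3_def by (intro sub_summable) auto
  have hhs: "hh summable_on PS"
  proof -
    have "(\<lambda>x. cc * g1 x + - g3 x) summable_on PS"
      using summable_on_add[OF summable_on_cmult_right[OF g1s] summable_on_uminus[THEN iffD2, OF g3s]] .
    moreover have e: "hh = (\<lambda>x. cc * g1 x + - g3 x)" by (rule ext) (rule hh_eq)
    ultimately show ?thesis by simp
  qed
  have "infsum (\<lambda>x. complex_of_real (hh x)) PS = complex_of_real (infsum hh PS)"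
    using has_sum_of_real[OF has_sum_infsum[OF hhs]] by (rule infsumI)
  then have N: "cmod (Sigma2 q) = \<bar>infsum hh PS\<bar>" using S2 by simp
  define S1 where "S1 = infsum g1 PS"
  define S3 where "S3 = infsum g3 PS"
  have up: "infsum hh PS \<le> cc * S1"
  proof -
    have "infsum hh PS \<le> infsum (\<lambda>x. cc * g1 x) PS"
      using hhs summable_on_cmult_right[OF g1s] unfolding hh_eq g3_def
      by (intro infsum_mono) (auto simp: wt_nonneg)
    also have "\<dots> = cc * S1" unfolding S1_def by (rule infsum_cmult_right) (use g1s in auto)
    finally show ?thesis .
  qed
  have lo: "infsum hh PS \<ge> - S3"
  proof -
    have "infsum (\<lambda>x. - g3 x) PS \<le> infsum hh PS"
      using hhs summable_on_uminus[THEN iffD2, OF g3s] cc_bounds(1) unfolding hh_eq g1_def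
      by (intro infsum_mono) (auto simp: wt_nonneg)
    then show ?thesis unfolding S3_def infsum_uminus .
  qed
  have S1_nonneg: "S1 \<ge> 0" unfolding S1_def g1_def by (intro infsum_nonneg) (auto simp: wt_nonneg)
  have S3_bound: "S3 \<le> 1/2"
    unfolding S3_def
  proof (rule infsum_le_finite_sums[OF g3s])
    fix F assume F: "finite F" "F \<subseteq> PS"
    have "sum g3 F \<le> sum wt F" unfolding g3_def by (intro sum_mono) (auto simp: wt_nonneg)
    also have "\<dots> \<le> 1/2" using PS_fin_bound[OF F] .
    finally show "sum g3 F \<le> 1/2" .
  qed
  have S1_bound: "S1 \<le> const_A / real q + (pi^2/6) / (real q)^2 + 1 / (3 * (real q)^2)"
    unfolding S1_def
  proof (rule infsum_le_finite_sums[OF g1s])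
    fix F assume F: "finite F" "F \<subseteq> PS"
    define E where "E = {x\<in>F. [fst x ^ snd x = 1] (mod q)}"
    have "sum g1 F = sum wt E" unfolding g1_def E_def by (rule sum.inter_filter[OF F(1), symmetric])
    have Eprop: "\<forall>x\<in>E. prime (fst x) \<and> snd x \<ge> 2 \<and> [fst x ^ snd x = 1] (mod q)"
      using F(2) unfolding E_def PS_def by auto
    have neq: "fst x \<noteq> q" if "x \<in> E" for x
    proof
      assume e: "fst x = q"
      have "snd x > 0" using Eprop that by auto
      then have "q ^ snd x mod q = 0" by simp
      moreover have "[q ^ snd x = 1] (mod q)" using Eprop that e by auto
      ultimately show False using q_gt1 by (simp add: cong_def)
    qed
    define E1 where "E1 = {x\<in>E. fst x < q}"
    define E2 where "E2 = {x\<in>E. fst x > q \<and> snd x = 2}"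
    define E3 where "E3 = {x\<in>E. fst x > q \<and> snd x \<ge> 3}"
    have finE: "finite E" using F(1) unfolding E_def by simp
    have fin123: "finite E1" "finite E2" "finite E3" using finE unfolding E1_def E2_def E3_def by auto
    have EU: "E = E1 \<union> (E2 \<union> E3)"
    proof
      show "E \<subseteq> E1 \<union> (E2 \<union> E3)"
      proof
        fix x assume x: "x \<in> E"
        have "fst x \<noteq> q" using neq x .
        moreover have "snd x \<ge> 2" using Eprop x by blast
        ultimately show "x \<in> E1 \<union> (E2 \<union> E3)" using x unfolding E1_def E2_def E3_def by auto
      qed
    qed (auto simp: E1_def E2_def E3_def)
    have "sum wt E = sum wt E1 + (sum wt E2 + sum wt E3)"
      unfolding EU using fin123
      by (simp add: sum.union_disjoint E1_def E2_def E3_def disjoint_iff)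
    moreover have "sum wt E1 \<le> const_A / real q"
      using fin123(1) Eprop by (intro E1_bound) (auto simp: E1_def)
    moreover have "sum wt E2 \<le> pi^2/6/(real q)^2"
      using fin123(2) Eprop by (intro E2_bound assms(1)) (auto simp: E2_def)
    moreover have "sum wt E3 \<le> 1/(3 * (real q)^2)"
      using fin123(3) q3 by (intro E3_bound) (auto simp: E3_def)
    ultimately show "sum g1 F \<le> const_A / real q + (pi^2/6) / (real q)^2 + 1 / (3 * (real q)^2)"
      using \<open>sum g1 F = sum wt E\<close> by simp
  qed
  have Q3: "real q \<ge> 3" using q3 by simp
  have P: "pi^2/6 > (0::real)" by simp
  have b1: "cc * S1 < const_A + (pi^2/6 - const_A) / real q"
    using final_arith[OF Q3 A_ge P cc_bounds S1_nonneg S1_bound] .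
  have b2: "S3 < const_A + (pi^2/6 - const_A) / real q"
    using final_arith2[OF Q3 A_ge P S3_bound] .
  show ?thesis unfolding N using up lo b1 b2 by linarith
qed


end
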